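(* Let $R$ be a rational map of degree $d\ge 2$ all of whose fixed points except one are attracting and the remaining one is repelling; denote the attracting fixed points by $\alpha_1,\dots,\alpha_d$. Suppose there is $h\in\mathbb{C}\setminus\{0\}$ such that for each $i=1,\dots,d$ the multiplier of $\alpha_i$ equals $\frac{m_i-h}{m_i}$ for some $m_i\in\mathbb{N}$. Then for a suitable Möbius map $\varphi$ (sending the repelling fixed point to $\infty$), $\varphi\circ R\circ\varphi^{-1}=N_{h,p}$, where $p(z)=\prod_{i=1}^d\big(z-\varphi(\alpha_i)\big)^{m_i}$.
   Context: For a polynomial $p$ and $h\in\mathbb{C}$, $N_{h,p}(z)=z-h\,\frac{p(z)}{p'(z)}$. *)

theory Defs
  imports "HOL-Analysis.Analysis" "HOL-Computational_Algebra.Polynomial_Factorial" "HOL-Computational_Algebra.Field_as_Ring"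
begin

text \<open>The Riemann sphere: None is the point at infinity, Some z the finite point z.\<close>
type_synonym csphere = "complex option"

text \<open>Sphere map of the quotient P/Q, assuming P, Q coprime.\<close>
definition rat_map0 :: "complex poly \<Rightarrow> complex poly \<Rightarrow> csphere \<Rightarrow> csphere" where
  "rat_map0 P Q x = (case x of
       Some z \<Rightarrow> (if poly Q z = 0 then None else Some (poly P z / poly Q z))
     | None \<Rightarrow> (if degree P > degree Q then None
                else Some (coeff P (degree Q) / lead_coeff Q)))"

definition rat_map :: "complex poly \<Rightarrow> complex poly \<Rightarrow> csphere \<Rightarrow> csphere" where
  "rat_map P Q = rat_map0 (P div gcd P Q) (Q div gcd P Q)"

definition mobius :: "complex \<Rightarrow> complex \<Rightarrow> complex \<Rightarrow> complex \<Rightarrow> csphere \<Rightarrow> csphere" where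
  "mobius a b c e = rat_map [:b, a:] [:e, c:]"

text \<open>Local coordinate charts of the sphere centred at a point p (mapping p to 0).\<close>
definition to_chart :: "csphere \<Rightarrow> csphere \<Rightarrow> complex" where
  "to_chart p q = (case p of
       Some a \<Rightarrow> (case q of Some x \<Rightarrow> x - a | None \<Rightarrow> 0)
     | None \<Rightarrow> (case q of Some x \<Rightarrow> inverse x | None \<Rightarrow> 0))"

definition from_chart :: "csphere \<Rightarrow> complex \<Rightarrow> csphere" where
  "from_chart p w = (case p of
       Some a \<Rightarrow> Some (w + a)
     | None \<Rightarrow> (if w = 0 then None else Some (inverse w)))"

definition multiplier :: "(csphere \<Rightarrow> csphere) \<Rightarrow> csphere \<Rightarrow> complex" where
  "multiplier f p = deriv (\<lambda>w. to_chart p (f (from_chart p w))) 0"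

text \<open>Relaxed Newton map N_{h,p}(z) = z - h p(z)/p'(z), as a map of the sphere.\<close>
definition newton_map :: "complex \<Rightarrow> complex poly \<Rightarrow> csphere \<Rightarrow> csphere" where
  "newton_map h p = rat_map ([:0, 1:] * pderiv p - smult h p) (pderiv p)"

end

theory Submission
  imports Defs "HOL-Computational_Algebra.Fundamental_Theorem_Algebra"
begin


lemma rat_map0_smult:
  assumes "c \<noteq> 0"
  shows "rat_map0 (smult c A) (smult c B) = rat_map0 A B"
proof
  fix x show "rat_map0 (smult c A) (smult c B) x = rat_map0 A B x"
    using assms by (cases x) (auto simp: rat_map0_def)
qed

lemma rat_map_mult:
  fixes A B C :: "complex poly"
  assumes "C \<noteq> 0"
  shows "rat_map (C * A) (C * B) = rat_map A B"
proof (cases "gcd A B = 0")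
  case True
  then show ?thesis by simp
next
  case False
  define g where "g = gcd A B"
  obtain A' where A': "A = g * A'" unfolding g_def by (meson dvd_def gcd_dvd1)
  obtain B' where B': "B = g * B'" unfolding g_def by (meson dvd_def gcd_dvd2)
  have g0: "g \<noteq> 0" using False g_def by simp
  have gg: "gcd (C*A) (C*B) = normalize C * g"
    unfolding g_def by (simp only: gcd_mult_left normalize_mult normalize_gcd)
  have u: "C = normalize C * unit_factor C" by simp
  have nC: "normalize C \<noteq> 0" using assms by simp
  have e1: "C*A = (normalize C * g) * (unit_factor C * A')"
    by (simp add: A' mult_ac)
  have e2: "C*B = (normalize C * g) * (unit_factor C * B')"
    by (simp add: B' mult_ac)
  have ng: "normalize C * g \<noteq> 0" using g0 nC by simp
  have "(C*A) div gcd (C*A) (C*B) = unit_factor C * A'"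
    unfolding gg by (subst e1, rule nonzero_mult_div_cancel_left[OF ng])
  moreover have "(C*B) div gcd (C*A) (C*B) = unit_factor C * B'"
    unfolding gg by (subst e2, rule nonzero_mult_div_cancel_left[OF ng])
  moreover have "A div g = A'" using g0 by (subst A') simp
  moreover have "B div g = B'" using g0 by (subst B') simp
  moreover obtain k where k: "unit_factor C = [:k:]" "k \<noteq> 0"
  proof -
    have "is_unit (unit_factor C)" using assms by (rule unit_factor_is_unit)
    then obtain k where "unit_factor C = [:k:]" "k dvd 1" using is_unit_poly_iff by blast
    then show ?thesis using that by (metis one_neq_zero dvd_0_left)
  qed
  ultimately show ?thesis
    unfolding rat_map_def g_def[symmetric] using rat_map0_smult[of k A' B'] by (simp add: k)
qed


lemma poly_zero_many_roots:
  fixes p :: "complex poly" and a :: "nat \<Rightarrow> complex"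
  assumes "inj_on a I" "finite I" "degree p < card I" "\<forall>i\<in>I. poly p (a i) = 0"
  shows "p = 0"
proof (rule ccontr)
  assume p0: "p \<noteq> 0"
  have "a ` I \<subseteq> {x. poly p x = 0}" using assms by auto
  hence "card (a ` I) \<le> card {x. poly p x = 0}"
    using poly_roots_finite[OF p0] card_mono by blast
  also have "\<dots> \<le> degree p" using card_poly_roots_bound[OF p0] .
  finally show False using card_image[OF assms(1)] assms(3) by simp
qed

lemma degree_lt_of_coeff:
  fixes q :: "complex poly"
  assumes "degree q \<le> d" "coeff q d = 0" "d > 0"
  shows "degree q < d"
proof (rule ccontr)
  assume "\<not> degree q < d"
  hence "degree q = d" using assms by simp
  hence "q = 0" using assms(2) by (metis leading_coeff_0_iff)
  thus False using \<open>degree q = d\<close> assms(3) by simp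
qed

lemma eval_sum_prod:
  fixes a :: "nat \<Rightarrow> complex" and w :: "nat \<Rightarrow> complex"
  assumes "finite I" "k \<in> I"
  shows "poly (\<Sum>i\<in>I. smult (w i) (\<Prod>j\<in>I-{i}. [:- a j, 1:])) (a k)
     = w k * (\<Prod>j\<in>I-{k}. (a k - a j))"
proof -
  have "poly (\<Sum>i\<in>I. smult (w i) (\<Prod>j\<in>I-{i}. [:- a j, 1:])) (a k)
      = (\<Sum>i\<in>I. w i * (\<Prod>j\<in>I-{i}. (a k - a j)))"
    by (simp add: poly_sum poly_prod)
  also have "\<dots> = w k * (\<Prod>j\<in>I-{k}. (a k - a j)) + (\<Sum>i\<in>I-{k}. w i * (\<Prod>j\<in>I-{i}. (a k - a j)))"
    by (subst sum.remove[OF assms]) simp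
  also have "(\<Sum>i\<in>I-{k}. w i * (\<Prod>j\<in>I-{i}. (a k - a j))) = 0"
  proof (rule sum.neutral, rule ballI)
    fix i assume "i \<in> I - {k}"
    hence "k \<in> I - {i}" using assms by auto
    hence "(\<Prod>j\<in>I-{i}. (a k - a j)) = 0"
      using assms(1) by (intro prod_zero) auto
    thus "w i * (\<Prod>j\<in>I-{i}. (a k - a j)) = 0" by simp
  qed
  finally show ?thesis by simp
qed


lemma core:
  fixes B F :: "complex poly" and a :: "nat \<Rightarrow> complex" and m :: "nat \<Rightarrow> nat" and h :: complex
  assumes inj: "inj_on a {1..d}" and dB: "degree B < d" and dF: "degree F \<le> d" and h0: "h \<noteq> 0"
    and data: "\<forall>i\<in>{1..d}. poly F (a i) = 0 \<and> poly B (a i) \<noteq> 0 \<and> m i \<ge> 1 \<and>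
                 h * poly B (a i) = of_nat (m i) * poly (pderiv F) (a i)"
  shows "rat_map ([:0,1:]*B - F) B = newton_map h (\<Prod>i\<in>{1..d}. [:- a i, 1:] ^ m i)"
proof -
  define I where "I = {1..d}"
  have fI: "finite I" and cI: "card I = d" by (simp_all add: I_def)
  have d0: "d > 0" using dB by simp
  have dat: "\<And>i. i \<in> I \<Longrightarrow> poly F (a i) = 0 \<and> poly B (a i) \<noteq> 0 \<and> m i \<ge> 1 \<and>
                 h * poly B (a i) = of_nat (m i) * poly (pderiv F) (a i)"
    using data I_def by auto
  have injI: "inj_on a I" using inj I_def by simp
  define X where "X i = [:- a i, 1:]" for i
  define L where "L = (\<Prod>i\<in>I. X i)"
  define D where "D = (\<Prod>i\<in>I. X i ^ (m i - 1))"
  define G where "G = (\<Sum>i\<in>I. smult (of_nat (m i)) (\<Prod>j\<in>I-{i}. X j))"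
  define p where "p = (\<Prod>i\<in>I. X i ^ m i)"
  have X0: "X i \<noteq> 0" for i by (simp add: X_def)
  have degX: "degree (X i) = 1" for i by (simp add: X_def)
  have degL: "degree L = d"
    unfolding L_def by (subst degree_prod_sum_eq) (auto simp: X0 degX cI)
  have lcL: "lead_coeff L = 1"
    unfolding L_def lead_coeff_prod by (simp add: X_def)
  have cLd: "coeff L d = 1" using degL lcL by simp
  have rootL: "poly L (a k) = 0" if "k \<in> I" for k
    unfolding L_def poly_prod using fI that by (intro prod_zero) (auto simp: X_def intro!: bexI[of _ k])
  define c where "c = coeff F d"
  have FL: "F = smult c L"
  proof -
    have "F - smult c L = 0"
    proof (rule poly_zero_many_roots[OF injI fI])
      have "degree (F - smult c L) \<le> d"
        using dF degL by (meson degree_diff_le degree_smult_le le_trans)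
      moreover have "coeff (F - smult c L) d = 0" by (simp add: c_def cLd)
      ultimately show "degree (F - smult c L) < card I"
        using degree_lt_of_coeff d0 cI by simp
      show "\<forall>i\<in>I. poly (F - smult c L) (a i) = 0" using dat rootL by simp
    qed
    thus ?thesis by simp
  qed
  have pdL: "pderiv L = (\<Sum>i\<in>I. smult 1 (\<Prod>j\<in>I-{i}. X j))"
    unfolding L_def pderiv_prod by (simp add: X_def pderiv_pCons)
  have Fd: "poly (pderiv F) (a k) = c * (\<Prod>j\<in>I-{k}. (a k - a j))" if "k \<in> I" for k
    using eval_sum_prod[OF fI that, of "\<lambda>_. 1" a] unfolding FL pderiv_smult pdL X_def by simp
  have Gk: "poly G (a k) = of_nat (m k) * (\<Prod>j\<in>I-{k}. (a k - a j))" if "k \<in> I" for k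
    using eval_sum_prod[OF fI that, of "\<lambda>i. of_nat (m i)" a] unfolding G_def X_def by simp
  have oneI: "1 \<in> I" using d0 I_def by simp
  have c0: "c \<noteq> 0"
  proof
    assume "c = 0"
    hence "poly (pderiv F) (a 1) = 0" using Fd[OF oneI] by simp
    thus False using dat[OF oneI] h0 by auto
  qed
  have degG: "degree G < d"
  proof -
    have "degree G \<le> d - 1"
      unfolding G_def
    proof (rule degree_sum_le[OF fI])
      fix i assume "i \<in> I"
      have "degree (\<Prod>j\<in>I-{i}. X j) \<le> (\<Sum>j\<in>I-{i}. degree (X j))"
        using degree_prod_sum_le[of "I-{i}" X] fI by (simp add: o_def)
      also have "\<dots> = d - 1" using \<open>i \<in> I\<close> fI cI by (simp add: degX)
      finally show "degree (smult (of_nat (m i)) (\<Prod>j\<in>I-{i}. X j)) \<le> d - 1"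
        using degree_smult_le le_trans by blast
    qed
    thus ?thesis using d0 by simp
  qed
  have BG: "smult h B = smult c G"
  proof -
    have "smult h B - smult c G = 0"
    proof (rule poly_zero_many_roots[OF injI fI])
      have "degree (smult h B - smult c G) \<le> max (degree (smult h B)) (degree (smult c G))"
        by (rule degree_diff_le_max)
      also have "\<dots> < d" using dB degG degree_smult_le le_less_trans by (simp add: max_def)
      finally show "degree (smult h B - smult c G) < card I" using cI by simp
      show "\<forall>i\<in>I. poly (smult h B - smult c G) (a i) = 0"
        using dat Fd Gk by simp
    qed
    thus ?thesis by simp
  qed
  have pD: "p = D * L"
    unfolding p_def D_def L_def prod.distrib[symmetric]
  proof (rule prod.cong[OF refl])
    fix i assume "i \<in> I"
    hence "m i = Suc (m i - 1)" using dat by force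
    thus "X i ^ m i = X i ^ (m i - 1) * X i" by (metis power_Suc2)
  qed
  have pdp: "pderiv p = D * G"
  proof -
    have "pderiv p = (\<Sum>i\<in>I. (\<Prod>j\<in>I-{i}. X j ^ m j) * pderiv (X i ^ m i))"
      unfolding p_def pderiv_prod ..
    also have "\<dots> = (\<Sum>i\<in>I. D * smult (of_nat (m i)) (\<Prod>j\<in>I-{i}. X j))"
    proof (rule sum.cong[OF refl])
      fix i assume iI: "i \<in> I"
      have pX: "pderiv (X i) = 1" by (simp add: X_def pderiv_pCons)
      have D1: "D = X i ^ (m i - 1) * (\<Prod>j\<in>I-{i}. X j ^ (m j - 1))"
        unfolding D_def using prod.remove[OF fI iI] .
      have "(\<Prod>j\<in>I-{i}. X j ^ (m j - 1)) * (\<Prod>j\<in>I-{i}. X j) = (\<Prod>j\<in>I-{i}. X j ^ m j)"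
        unfolding prod.distrib[symmetric]
      proof (rule prod.cong[OF refl])
        fix j assume "j \<in> I - {i}"
        hence "m j = Suc (m j - 1)" using dat by force
        thus "X j ^ (m j - 1) * X j = X j ^ m j" by (metis power_Suc2)
      qed
      thus "(\<Prod>j\<in>I-{i}. X j ^ m j) * pderiv (X i ^ m i) = D * smult (of_nat (m i)) (\<Prod>j\<in>I-{i}. X j)"
        unfolding pderiv_power pX D1 by (simp add: algebra_simps)
    qed
    also have "\<dots> = D * G" unfolding G_def by (simp add: sum_distrib_left)
    finally show ?thesis .
  qed
  have G': "G = smult (h / c) B" using BG c0 by (metis smult_smult nonzero_divide_eq_eq mult.commute smult_eq_iff)
  have L': "L = smult (1 / c) F" using FL c0 by simp
  define C where "C = smult (h / c) D"
  have D0: "D \<noteq> 0" unfolding D_def using fI by (simp add: X0)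
  have C0: "C \<noteq> 0" using D0 c0 h0 by (simp add: C_def)
  have e0: "[:0,1:] * (D * G) - smult h (D * L) = C * ([:0,1:]*B - F)"
    unfolding G' L' C_def using c0 by (simp add: algebra_simps smult_diff_right)
  have e1: "[:0,1:] * pderiv p - smult h p = C * ([:0,1:]*B - F)"
    using e0 pdp pD by simp
  have e2: "pderiv p = C * B"
    unfolding pdp G' C_def by (simp add: algebra_simps)
  have "newton_map h p = rat_map ([:0,1:]*B - F) B"
    unfolding newton_map_def e1 by (subst e2) (rule rat_map_mult[OF C0])
  thus ?thesis unfolding p_def X_def I_def ..
qed



lemma rat_map_coprime:
  assumes "coprime P Q"
  shows "rat_map P Q = rat_map0 P Q"
proof -
  have "gcd P Q = 1" using assms by (simp add: coprime_iff_gcd_eq_1)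
  thus ?thesis unfolding rat_map_def by simp
qed

lemma fix_Some:
  assumes "rat_map0 P Q (Some x) = Some x"
  shows "poly Q x \<noteq> 0 \<and> poly P x = x * poly Q x"
  using assms by (auto simp: rat_map0_def split: if_splits simp: field_simps)

lemma fix_None:
  assumes "rat_map0 P Q None = None"
  shows "degree P > degree Q"
  using assms by (auto simp: rat_map0_def split: if_splits)

definition revd :: "nat \<Rightarrow> complex poly \<Rightarrow> complex poly" where
  "revd n p = (\<Sum>k\<le>n. monom (coeff p k) (n - k))"

lemma coeff_revd: "coeff (revd n p) j = (if j \<le> n then coeff p (n - j) else 0)"
proof -
  have "coeff (revd n p) j = (\<Sum>k\<le>n. if n - k = j then coeff p k else 0)"
    unfolding revd_def coeff_sum by (simp add: eq_commute)
  also have "\<dots> = (\<Sum>k\<le>n. if k = n - j \<and> j \<le> n then coeff p k else 0)"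
    by (rule sum.cong) auto
  also have "\<dots> = (if j \<le> n then coeff p (n - j) else 0)"
    by (cases "j \<le> n") (simp_all add: sum.delta)
  finally show ?thesis .
qed

lemma degree_revd: "degree (revd n p) \<le> n"
  unfolding revd_def by (rule degree_sum_le) (auto intro: order.trans[OF degree_monom_le])

lemma poly_revd:
  assumes "degree p \<le> n" "w \<noteq> 0"
  shows "poly (revd n p) w = w ^ n * poly p (inverse w)"
proof -
  have "poly p (inverse w) = (\<Sum>k\<le>n. coeff p k * inverse w ^ k)"
    unfolding poly_altdef
    by (rule sum.mono_neutral_left) (use assms in \<open>auto simp: coeff_eq_0\<close>)
  hence "w ^ n * poly p (inverse w) = (\<Sum>k\<le>n. coeff p k * (w ^ n * inverse w ^ k))"
    by (simp add: sum_distrib_left mult_ac)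
  also have "\<dots> = (\<Sum>k\<le>n. coeff p k * w ^ (n - k))"
    by (rule sum.cong) (use assms in \<open>auto simp: power_diff power_inverse field_simps\<close>)
  also have "\<dots> = poly (revd n p) w"
    unfolding revd_def by (simp add: poly_sum poly_monom)
  finally show ?thesis ..
qed


lemma DERIV_poly_shift:
  "((\<lambda>w. poly P (w + x)) has_field_derivative poly (pderiv P) x) (at 0)"
proof -
  have "((\<lambda>w. poly P (w + x)) has_field_derivative poly (pderiv P) (0 + x) * 1) (at 0)"
  proof (rule DERIV_chain2[OF poly_DERIV])
    show "((\<lambda>w. w + x) has_field_derivative 1) (at 0)"
      using DERIV_add[OF DERIV_ident DERIV_const[of x]] by simp
  qed
  thus ?thesis by simp
qed

lemma mult_Some:
  fixes P Q :: "complex poly"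
  assumes cop: "coprime P Q" and fx: "rat_map P Q (Some x) = Some x"
  shows "multiplier (rat_map P Q) (Some x) = 1 - poly (pderiv ([:0,1:]*Q - P)) x / poly Q x"
proof -
  have R: "rat_map P Q = rat_map0 P Q" by (rule rat_map_coprime[OF cop])
  have Qx: "poly Q x \<noteq> 0" and Px: "poly P x = x * poly Q x"
    using fix_Some[of P Q x] fx R by auto
  define S where "S = {w. poly Q (w + x) \<noteq> 0}"
  have "continuous_on UNIV (\<lambda>w. poly Q (w + x))" by (intro continuous_intros)
  hence oS: "open S" unfolding S_def by (rule open_Collect_neq[OF _ continuous_on_const])
  have S0: "0 \<in> S" using Qx by (simp add: S_def)
  define g where "g w = poly P (w + x) / poly Q (w + x) - x" for w
  have eq: "g w = to_chart (Some x) (rat_map P Q (from_chart (Some x) w))" if "w \<in> S" for w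
    using that by (auto simp: S_def g_def R rat_map0_def to_chart_def from_chart_def)
  have "(g has_field_derivative
      (poly (pderiv P) x * poly Q (0 + x) - poly P (0 + x) * poly (pderiv Q) x) / (poly Q (0 + x) * poly Q (0 + x)) - 0) (at 0)"
    unfolding g_def
    by (rule DERIV_diff[OF DERIV_divide[OF DERIV_poly_shift DERIV_poly_shift] DERIV_const]) (use Qx in simp)
  hence "(g has_field_derivative
      (poly (pderiv P) x * poly Q x - poly P x * poly (pderiv Q) x) / (poly Q x * poly Q x)) (at 0)"
    by simp
  hence "((\<lambda>w. to_chart (Some x) (rat_map P Q (from_chart (Some x) w))) has_field_derivative
      (poly (pderiv P) x * poly Q x - poly P x * poly (pderiv Q) x) / (poly Q x * poly Q x)) (at 0)"
    by (rule has_field_derivative_transform_within_open[OF _ oS S0]) (rule eq)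
  hence "multiplier (rat_map P Q) (Some x) = (poly (pderiv P) x * poly Q x - poly P x * poly (pderiv Q) x) / (poly Q x * poly Q x)"
    unfolding multiplier_def by (rule DERIV_imp_deriv)
  also have "\<dots> = 1 - poly (pderiv ([:0,1:]*Q - P)) x / poly Q x"
  proof -
    have pd: "poly (pderiv ([:0,1:]*Q - P)) x = x * poly (pderiv Q) x + poly Q x - poly (pderiv P) x"
      by (simp add: pderiv_mult pderiv_diff pderiv_pCons)
    show ?thesis unfolding pd Px using Qx by (simp add: field_simps)
  qed
  finally show ?thesis .
qed


lemma mult_None:
  fixes P Q :: "complex poly"
  assumes cop: "coprime P Q" and fx: "rat_map P Q None = None"
  shows "multiplier (rat_map P Q) None = coeff Q (degree P - 1) / lead_coeff P"
proof -
  have R: "rat_map P Q = rat_map0 P Q" by (rule rat_map_coprime[OF cop])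
  have dPQ: "degree P > degree Q" using fix_None fx R by metis
  define n where "n = degree P"
  have n0: "n > 0" using dPQ n_def by simp
  have P0: "P \<noteq> 0" using n0 n_def by auto
  define Pr where "Pr = revd n P"
  define Qr where "Qr = revd n Q"
  have Pr0: "poly Pr 0 = lead_coeff P" by (simp add: Pr_def poly_0_coeff_0 coeff_revd n_def)
  have Qr0: "poly Qr 0 = 0" using dPQ by (simp add: Qr_def poly_0_coeff_0 coeff_revd n_def coeff_eq_0)
  have lP: "lead_coeff P \<noteq> 0" using P0 by simp
  have eqf: "(\<lambda>w. to_chart None (rat_map P Q (from_chart None w))) = (\<lambda>w. poly Qr w / poly Pr w)"
  proof
    fix w :: complex
    show "to_chart None (rat_map P Q (from_chart None w)) = poly Qr w / poly Pr w"
    proof (cases "w = 0")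
      case True
      then show ?thesis using fx Qr0 by (simp add: from_chart_def to_chart_def)
    next
      case False
      have pq: "poly Qr w = w ^ n * poly Q (inverse w)"
        unfolding Qr_def using dPQ False n_def by (intro poly_revd) auto
      have pp: "poly Pr w = w ^ n * poly P (inverse w)"
        unfolding Pr_def using False n_def by (intro poly_revd) auto
      have wn: "w ^ n \<noteq> 0" using False by simp
      show ?thesis
      proof (cases "poly Q (inverse w) = 0")
        case True
        then show ?thesis using False by (simp add: from_chart_def to_chart_def R rat_map0_def pq)
      next
        case Q0: False
        have "to_chart None (rat_map P Q (from_chart None w)) = poly Q (inverse w) / poly P (inverse w)"
          using False Q0 by (simp add: from_chart_def to_chart_def R rat_map0_def)
        also have "\<dots> = poly Qr w / poly Pr w" unfolding pq pp by (rule mult_divide_mult_cancel_left[OF wn, symmetric])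
        finally show ?thesis .
      qed
    qed
  qed
  have "((\<lambda>w. poly Qr w / poly Pr w) has_field_derivative
     (poly (pderiv Qr) 0 * poly Pr 0 - poly Qr 0 * poly (pderiv Pr) 0) / (poly Pr 0 * poly Pr 0)) (at 0)"
    by (rule DERIV_divide[OF poly_DERIV poly_DERIV]) (use Pr0 lP in simp)
  hence "multiplier (rat_map P Q) None =
     (poly (pderiv Qr) 0 * poly Pr 0 - poly Qr 0 * poly (pderiv Pr) 0) / (poly Pr 0 * poly Pr 0)"
    unfolding multiplier_def eqf by (rule DERIV_imp_deriv)
  also have "\<dots> = poly (pderiv Qr) 0 / lead_coeff P" using Pr0 Qr0 lP by simp
  also have "poly (pderiv Qr) 0 = coeff Q (n - 1)"
    using n0 by (simp add: poly_0_coeff_0 coeff_pderiv Qr_def coeff_revd)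
  finally show ?thesis unfolding n_def .
qed



lemma coprime_no_common_root:
  fixes P Q :: "complex poly"
  assumes "coprime P Q" "poly P z = 0" "poly Q z = 0"
  shows False
proof -
  have "[:-z,1:] dvd P" "[:-z,1:] dvd Q" using assms by (simp_all add: poly_eq_0_iff_dvd)
  hence "is_unit [:-z,1:]" using assms(1) coprime_common_divisor by blast
  thus False by (simp add: is_unit_poly_iff)
qed

lemma no_common_root_coprime:
  fixes A B :: "complex poly"
  assumes "\<And>z. poly A z = 0 \<Longrightarrow> poly B z = 0 \<Longrightarrow> False" "A \<noteq> 0 \<or> B \<noteq> 0"
  shows "coprime A B"
proof -
  define g where "g = gcd A B"
  have g0: "g \<noteq> 0" using assms(2) g_def by auto
  have "degree g = 0"
  proof (rule ccontr)
    assume "degree g \<noteq> 0"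
    hence "\<not> (\<exists>a l. a \<noteq> 0 \<and> l = 0 \<and> g = pCons a l)" by auto
    then obtain z where "poly g z = 0" using fundamental_theorem_of_algebra_alt by blast
    moreover have "g dvd A" "g dvd B" by (simp_all add: g_def)
    ultimately have "poly A z = 0" "poly B z = 0" by (auto simp: poly_eq_0_iff_dvd dest: dvd_trans)
    thus False using assms(1) by blast
  qed
  then obtain c where gc: "g = [:c:]" by (metis degree_eq_zeroE)
  with g0 have c0: "c \<noteq> 0" by simp
  have "c dvd 1" by (rule dvdI[of _ _ "inverse c"]) (use c0 in simp)
  hence "is_unit g" using gc by (simp add: is_unit_poly_iff)
  thus ?thesis by (simp add: g_def coprime_iff_gcd_eq_1)
qed

lemma gcd_one_aux1: "gcd [:0,1:] [:1:] = (1::complex poly)"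
  unfolding one_pCons[symmetric] by simp

lemma gcd_one_aux2: "gcd [:1:] [:-b,1:] = (1::complex poly)"
  unfolding one_pCons[symmetric] by simp

lemma mobius_id: "mobius 1 0 0 1 = id"
proof
  fix x show "mobius 1 0 0 1 x = id x"
    by (cases x) (simp_all add: mobius_def rat_map_def rat_map0_def gcd_one_aux1)
qed

definition phi :: "complex \<Rightarrow> csphere \<Rightarrow> csphere" where
  "phi b x = (case x of None \<Rightarrow> Some 0 | Some z \<Rightarrow> (if z = b then None else Some (1 / (z - b))))"

definition psi :: "complex \<Rightarrow> csphere \<Rightarrow> csphere" where
  "psi b x = (case x of None \<Rightarrow> Some b | Some w \<Rightarrow> (if w = 0 then None else Some (b + 1 / w)))"

lemma mobius_phi: "mobius 0 1 1 (-b) = phi b"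
proof
  fix x show "mobius 0 1 1 (-b) x = phi b x"
    by (cases x) (auto simp add: mobius_def rat_map_def rat_map0_def phi_def gcd_one_aux2)
qed

lemma inv_phi: "inv (phi b) = psi b"
proof (rule inv_unique_comp)
  show "phi b \<circ> psi b = id"
  proof
    fix x show "(phi b \<circ> psi b) x = id x"
      by (cases x) (auto simp: phi_def psi_def)
  qed
  show "psi b \<circ> phi b = id"
  proof
    fix x show "(psi b \<circ> phi b) x = id x"
      by (cases x) (auto simp: phi_def psi_def)
  qed
qed



lemma coeff_pcompose_top:
  fixes p :: "complex poly"
  assumes "degree p \<le> n"
  shows "coeff (pcompose p [:b,1:]) n = coeff p n"
proof (cases "degree p = n")
  case True
  have "lead_coeff (pcompose p [:b,1:]) = lead_coeff p"
    by (subst lead_coeff_comp) simp_all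
  moreover have "degree (pcompose p [:b,1:]) = degree p" by (simp add: degree_pcompose)
  ultimately show ?thesis using True by simp
next
  case False
  hence "degree p < n" using assms by simp
  moreover have "degree (pcompose p [:b,1:]) = degree p" by (simp add: degree_pcompose)
  ultimately show ?thesis by (simp add: coeff_eq_0)
qed

lemma conj_Some:
  fixes P Q :: "complex poly" and b :: complex and d :: nat
  assumes cop: "coprime P Q" and dd: "d = max (degree P) (degree Q)" and d0: "d > 0"
    and fb: "rat_map P Q (Some b) = Some b"
  defines "Ps \<equiv> pcompose P [:b,1:]" and "Qs \<equiv> pcompose Q [:b,1:]"
  defines "A \<equiv> revd d Qs" and "B \<equiv> revd d (Ps - smult b Qs)"
  shows "phi b \<circ> rat_map P Q \<circ> psi b = rat_map A B"
    and "degree B < d" and "coprime A B"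
proof -
  have R: "rat_map P Q = rat_map0 P Q" by (rule rat_map_coprime[OF cop])
  have Qb: "poly Q b \<noteq> 0" and Pb: "poly P b = b * poly Q b"
    using fix_Some[of P Q b] fb R by auto
  have pPs: "poly Ps z = poly P (b + z)" for z by (simp add: Ps_def poly_pcompose)
  have pQs: "poly Qs z = poly Q (b + z)" for z by (simp add: Qs_def poly_pcompose)
  have dPs: "degree Ps = degree P" by (simp add: Ps_def degree_pcompose)
  have dQs: "degree Qs = degree Q" by (simp add: Qs_def degree_pcompose)
  have dPd: "degree P \<le> d" and dQd: "degree Q \<le> d" using dd by auto
  have dBs: "degree (Ps - smult b Qs) \<le> d"
    using dPs dQs dPd dQd by (intro degree_diff_le) (auto intro: order.trans[OF degree_smult_le])
  have pA: "poly A w = w ^ d * poly Q (b + 1 / w)" if "w \<noteq> 0" for w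
    unfolding A_def using poly_revd[of Qs d w] that dQs dQd by (simp add: pQs divide_inverse)
  have pB: "poly B w = w ^ d * (poly P (b + 1 / w) - b * poly Q (b + 1 / w))" if "w \<noteq> 0" for w
    unfolding B_def using poly_revd[of "Ps - smult b Qs" d w] that dBs by (simp add: pQs pPs divide_inverse)
  have A0: "poly A 0 = coeff Q d"
    unfolding A_def poly_0_coeff_0 coeff_revd Qs_def using coeff_pcompose_top[OF dQd] by simp
  have B0: "poly B 0 = coeff P d - b * coeff Q d"
    unfolding B_def poly_0_coeff_0 coeff_revd Qs_def Ps_def
    using coeff_pcompose_top[OF dQd] coeff_pcompose_top[OF dPd] by simp
  have cBd: "coeff B d = 0"
    unfolding B_def coeff_revd using pPs[of 0] pQs[of 0] Pb by (simp add: poly_0_coeff_0[symmetric])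
  have cAd: "coeff A d = poly Q b"
    unfolding A_def coeff_revd using pQs[of 0] by (simp add: poly_0_coeff_0[symmetric])
  have degA: "degree A = d"
    using degree_revd[of d Qs] le_degree[of A d] cAd Qb unfolding A_def by simp
  show degB: "degree B < d"
    using degree_lt_of_coeff[OF _ cBd d0] degree_revd unfolding B_def by simp
  have A_nz: "A \<noteq> 0" using cAd Qb by auto
  have cPQ: "coeff P d \<noteq> 0 \<or> coeff Q d \<noteq> 0"
  proof (cases "degree P \<le> degree Q")
    case True
    hence "degree Q = d" using dd by simp
    hence "Q \<noteq> 0" using d0 by auto
    thus ?thesis using \<open>degree Q = d\<close> by auto
  next
    case False
    hence "degree P = d" using dd by simp
    hence "P \<noteq> 0" using d0 by auto
    thus ?thesis using \<open>degree P = d\<close> by auto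
  qed
  show copAB: "coprime A B"
  proof (rule no_common_root_coprime)
    fix w assume a: "poly A w = 0" and bb: "poly B w = 0"
    show False
    proof (cases "w = 0")
      case True
      thus False using a bb A0 B0 cPQ by auto
    next
      case False
      have "poly Q (b + 1 / w) = 0" using a pA[OF False] False by simp
      moreover have "poly P (b + 1 / w) = 0" using bb pB[OF False] False calculation by simp
      ultimately show False using coprime_no_common_root[OF cop] by blast
    qed
  next
    show "A \<noteq> 0 \<or> B \<noteq> 0" using A_nz by simp
  qed
  have RAB: "rat_map A B = rat_map0 A B" by (rule rat_map_coprime[OF copAB])
  show "phi b \<circ> rat_map P Q \<circ> psi b = rat_map A B"
  proof
    fix x
    show "(phi b \<circ> rat_map P Q \<circ> psi b) x = rat_map A B x"
    proof (cases x)
      case None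
      then show ?thesis using fb degB degA
        by (simp add: RAB psi_def phi_def rat_map0_def)
    next
      case (Some w)
      show ?thesis
      proof (cases "w = 0")
        case True
        show ?thesis
        proof (cases "degree P > degree Q")
          case True
          hence "degree P = d" using dd by simp
          hence "coeff P d \<noteq> 0" using d0 by auto
          moreover have "coeff Q d = 0" using True \<open>degree P = d\<close> by (simp add: coeff_eq_0)
          ultimately show ?thesis using \<open>x = Some w\<close> \<open>w = 0\<close> True A0 B0
            by (simp add: RAB R psi_def phi_def rat_map0_def)
        next
          case False
          hence dQ: "degree Q = d" using dd by simp
          hence qd: "coeff Q d \<noteq> 0" using d0 by auto
          have R0: "rat_map P Q None = Some (coeff P d / coeff Q d)"
            using False dQ by (simp add: R rat_map0_def)
          show ?thesis
          proof (cases "coeff P d / coeff Q d = b")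
            case True
            hence "coeff P d - b * coeff Q d = 0" using qd by (simp add: field_simps)
            then show ?thesis using \<open>x = Some w\<close> \<open>w = 0\<close> True R0 B0
              by (simp add: RAB psi_def phi_def rat_map0_def)
          next
            case False
            hence ne: "coeff P d - b * coeff Q d \<noteq> 0" using qd by (simp add: field_simps)
            have "1 / (coeff P d / coeff Q d - b) = coeff Q d / (coeff P d - b * coeff Q d)"
              using qd by (simp add: field_simps)
            then show ?thesis using \<open>x = Some w\<close> \<open>w = 0\<close> False R0 B0 A0 ne
              by (simp add: RAB psi_def phi_def rat_map0_def)
          qed
        qed
      next
        case False
        define z where "z = b + 1 / w"
        have wd: "w ^ d \<noteq> 0" using False by simp
        have ps: "psi b x = Some z" using \<open>x = Some w\<close> False by (simp add: psi_def z_def)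
        have pA': "poly A w = w ^ d * poly Q z" using pA[OF False] z_def by simp
        have pB': "poly B w = w ^ d * (poly P z - b * poly Q z)" using pB[OF False] z_def by simp
        show ?thesis
        proof (cases "poly Q z = 0")
          case True
          hence "poly P z \<noteq> 0" using coprime_no_common_root[OF cop] by blast
          then show ?thesis using True ps pA' pB' wd \<open>x = Some w\<close>
            by (simp add: RAB R phi_def rat_map0_def)
        next
          case Qz: False
          show ?thesis
          proof (cases "poly P z / poly Q z = b")
            case True
            hence "poly P z - b * poly Q z = 0" using Qz by (simp add: field_simps)
            then show ?thesis using True Qz ps pA' pB' wd \<open>x = Some w\<close>
              by (simp add: RAB R phi_def rat_map0_def)
          next
            case False
            hence ne: "poly P z - b * poly Q z \<noteq> 0" using Qz by (simp add: field_simps)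
            have "1 / (poly P z / poly Q z - b) = (w ^ d * poly Q z) / (w ^ d * (poly P z - b * poly Q z))"
              using Qz wd ne by (simp add: field_simps)
            then show ?thesis using False Qz ps pA' pB' wd ne \<open>x = Some w\<close>
              by (simp add: RAB R phi_def rat_map0_def)
          qed
        qed
      qed
    qed
  qed
qed


lemma transfer_Some:
  fixes P Q :: "complex poly" and b x :: complex and d :: nat
  assumes cop: "coprime P Q" and dd: "d = max (degree P) (degree Q)" and d0: "d > 0"
    and fb: "rat_map P Q (Some b) = Some b"
    and fx: "rat_map P Q (Some x) = Some x" and xb: "x \<noteq> b"
  defines "Ps \<equiv> pcompose P [:b,1:]" and "Qs \<equiv> pcompose Q [:b,1:]"
  defines "A \<equiv> revd d Qs" and "B \<equiv> revd d (Ps - smult b Qs)"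
  defines "F \<equiv> [:0,1:] * B - A" and "E \<equiv> [:0,1:] * Q - P" and "a \<equiv> 1 / (x - b)"
  shows "poly F a = 0" "poly B a = a ^ (d - 1) * poly Q x"
    "poly (pderiv F) a = a ^ (d - 1) * poly (pderiv E) x"
proof -
  have R: "rat_map P Q = rat_map0 P Q" by (rule rat_map_coprime[OF cop])
  have Qx: "poly Q x \<noteq> 0" and Px: "poly P x = x * poly Q x"
    using fix_Some[of P Q x] fx R by auto
  have pPs: "poly Ps z = poly P (b + z)" for z by (simp add: Ps_def poly_pcompose)
  have pQs: "poly Qs z = poly Q (b + z)" for z by (simp add: Qs_def poly_pcompose)
  have dPs: "degree Ps = degree P" by (simp add: Ps_def degree_pcompose)
  have dQs: "degree Qs = degree Q" by (simp add: Qs_def degree_pcompose)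
  have dPd: "degree P \<le> d" and dQd: "degree Q \<le> d" using dd by auto
  have dBs: "degree (Ps - smult b Qs) \<le> d"
    using dPs dQs dPd dQd by (intro degree_diff_le) (auto intro: order.trans[OF degree_smult_le])
  have pA: "poly A w = w ^ d * poly Q (b + 1 / w)" if "w \<noteq> 0" for w
    unfolding A_def using poly_revd[of Qs d w] that dQs dQd by (simp add: pQs divide_inverse)
  have pB: "poly B w = w ^ d * (poly P (b + 1 / w) - b * poly Q (b + 1 / w))" if "w \<noteq> 0" for w
    unfolding B_def using poly_revd[of "Ps - smult b Qs" d w] that dBs by (simp add: pQs pPs divide_inverse)
  have a0: "a \<noteq> 0" using xb by (simp add: a_def)
  have xa: "b + 1 / a = x" by (simp add: a_def)
  have ax: "a * (x - b) = 1" using xb by (simp add: a_def)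
  obtain d' where d': "d = Suc d'" using d0 by (cases d) auto
  have pF: "poly F w = - (w ^ (d + 1) * poly E (b + inverse w))" if "w \<noteq> 0" for w
  proof -
    define z where "z = b + inverse w"
    have "poly F w = w * (w ^ d * (poly P z - b * poly Q z)) - w ^ d * poly Q z"
      unfolding F_def using pA[OF that] pB[OF that] by (simp add: z_def divide_inverse)
    also have "\<dots> = - (w ^ (d + 1) * (z * poly Q z - poly P z))"
    proof -
      have k: "w ^ (d + 1) * z = w ^ (d + 1) * b + w ^ d"
        using that by (simp add: z_def distrib_left)
      have "- (w ^ (d + 1) * (z * poly Q z - poly P z)) = - ((w ^ (d + 1) * z) * poly Q z) + w ^ (d + 1) * poly P z"
        by (simp add: algebra_simps)
      also have "\<dots> = w * (w ^ d * (poly P z - b * poly Q z)) - w ^ d * poly Q z"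
        unfolding k by (simp add: algebra_simps)
      finally show ?thesis by simp
    qed
    also have "\<dots> = - (w ^ (d + 1) * poly E (b + inverse w))"
      by (simp add: E_def z_def)
    finally show ?thesis .
  qed
  show pBa: "poly B a = a ^ (d - 1) * poly Q x"
  proof -
    have "poly B a = a ^ d * ((x - b) * poly Q x)" using pB[OF a0] xa Px by (simp add: algebra_simps)
    also have "\<dots> = a ^ d' * (a * (x - b)) * poly Q x" by (simp add: d' mult_ac)
    also have "\<dots> = a ^ (d - 1) * poly Q x" using ax d' by simp
    finally show ?thesis .
  qed
  have Ex: "poly E x = 0" using Px by (simp add: E_def)
  show "poly F a = 0" using pF[OF a0] xa Ex by (simp add: divide_inverse)
  define g where "g w = - (w ^ (d + 1) * poly E (b + inverse w))" for w
  have d1: "((\<lambda>w. w ^ (d+1)) has_field_derivative of_nat (d+1) * (1 * a ^ (d + 1 - Suc 0))) (at a)"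
    by (rule DERIV_power[OF DERIV_ident])
  have d2: "((\<lambda>w. b + inverse w) has_field_derivative 0 + - (inverse a ^ Suc (Suc 0))) (at a)"
    by (rule DERIV_add[OF DERIV_const DERIV_inverse[OF a0]])
  have d3: "((\<lambda>w. poly E (b + inverse w)) has_field_derivative
      poly (pderiv E) (b + inverse a) * (0 + - (inverse a ^ Suc (Suc 0)))) (at a)"
    by (rule DERIV_chain2[OF poly_DERIV d2])
  have "(g has_field_derivative - (of_nat (d+1) * (1 * a^(d+1 - Suc 0)) * poly E (b + inverse a)
      + (poly (pderiv E) (b + inverse a) * (0 + - (inverse a ^ Suc (Suc 0)))) * a ^ (d+1))) (at a)"
    unfolding g_def by (rule DERIV_minus[OF DERIV_mult[OF d1 d3]])
  moreover have xa': "b + inverse a = x" using xa by (simp add: divide_inverse)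
  moreover have pw: "inverse a ^ Suc (Suc 0) * a ^ (d + 1) = a ^ (d - 1)"
  proof -
    have "inverse a ^ Suc (Suc 0) * a ^ (d + 1) = (inverse a * a) * (inverse a * a) * a ^ d'"
      by (simp add: d' mult_ac)
    thus ?thesis using a0 d' by simp
  qed
  ultimately have gder: "(g has_field_derivative a ^ (d - 1) * poly (pderiv E) x) (at a)"
  proof -
    assume h1: "(g has_field_derivative - (of_nat (d+1) * (1 * a^(d+1 - Suc 0)) * poly E (b + inverse a)
      + (poly (pderiv E) (b + inverse a) * (0 + - (inverse a ^ Suc (Suc 0)))) * a ^ (d+1))) (at a)"
    have "- (of_nat (d+1) * (1 * a^(d+1 - Suc 0)) * poly E (b + inverse a)
      + (poly (pderiv E) (b + inverse a) * (0 + - (inverse a ^ Suc (Suc 0)))) * a ^ (d+1))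
      = poly (pderiv E) x * (inverse a ^ Suc (Suc 0) * a ^ (d + 1))"
      unfolding xa' Ex by (simp add: mult_ac)
    also have "\<dots> = a ^ (d - 1) * poly (pderiv E) x" unfolding pw by (simp add: mult_ac)
    finally show ?thesis using h1 by simp
  qed
  have oS: "open {w::complex. w \<noteq> 0}"
  proof -
    have "{w::complex. w \<noteq> 0} = - {0}" by auto
    thus ?thesis by (simp add: open_Compl)
  qed
  have "((\<lambda>w. poly F w) has_field_derivative a ^ (d - 1) * poly (pderiv E) x) (at a)"
  proof (rule has_field_derivative_transform_within_open[OF gder oS])
    show "a \<in> {w. w \<noteq> 0}" using a0 by simp
    fix w assume "w \<in> {w::complex. w \<noteq> 0}"
    thus "g w = poly F w" using pF g_def by simp
  qed
  thus "poly (pderiv F) a = a ^ (d - 1) * poly (pderiv E) x"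
    by (rule DERIV_unique[OF poly_DERIV])
qed

lemma transfer_None:
  fixes P Q :: "complex poly" and b :: complex and d :: nat
  assumes dd: "d = max (degree P) (degree Q)" and dPQ: "degree P > degree Q"
  defines "Ps \<equiv> pcompose P [:b,1:]" and "Qs \<equiv> pcompose Q [:b,1:]"
  defines "A \<equiv> revd d Qs" and "B \<equiv> revd d (Ps - smult b Qs)"
  defines "F \<equiv> [:0,1:] * B - A"
  shows "poly F 0 = 0" "poly B 0 = lead_coeff P"
    "poly (pderiv F) 0 = lead_coeff P - coeff Q (degree P - 1)"
proof -
  have dP: "degree P = d" using dd dPQ by simp
  have dPd: "degree P \<le> d" and dQd: "degree Q \<le> d" using dd by auto
  have qd: "coeff Q d = 0" using dPQ dP by (simp add: coeff_eq_0)
  have A0: "poly A 0 = coeff Q d"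
    unfolding A_def poly_0_coeff_0 coeff_revd Qs_def using coeff_pcompose_top[OF dQd] by simp
  have B0: "poly B 0 = coeff P d - b * coeff Q d"
    unfolding B_def poly_0_coeff_0 coeff_revd Qs_def Ps_def
    using coeff_pcompose_top[OF dQd] coeff_pcompose_top[OF dPd] by simp
  have d0: "d > 0" using dPQ dP by simp
  have dQd1: "degree Q \<le> d - 1" using dPQ dP by simp
  have A1: "coeff A 1 = coeff Q (d - 1)"
    unfolding A_def coeff_revd Qs_def using coeff_pcompose_top[OF dQd1] d0 by simp
  show "poly F 0 = 0" using A0 qd by (simp add: F_def)
  show "poly B 0 = lead_coeff P" using B0 qd dP by simp
  have "poly (pderiv F) 0 = coeff F 1" by (simp add: poly_0_coeff_0 coeff_pderiv)
  also have "\<dots> = coeff B 0 - coeff A 1" by (simp add: F_def)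
  also have "\<dots> = lead_coeff P - coeff Q (degree P - 1)"
    using B0 qd dP A1 by (simp add: poly_0_coeff_0)
  finally show "poly (pderiv F) 0 = lead_coeff P - coeff Q (degree P - 1)" .
qed



lemma mult_eq_aux:
  fixes u v h :: complex and m :: nat
  assumes "m \<ge> 1" "1 - u / v = (of_nat m - h) / of_nat m" "v \<noteq> 0"
  shows "h * v = of_nat m * u"
proof -
  have m0: "(of_nat m :: complex) \<noteq> 0" using assms(1) by simp
  from assms(2) have "u / v = h / of_nat m" using m0 by (simp add: diff_divide_distrib)
  thus ?thesis using m0 assms(3) by (simp add: field_simps)
qed

lemma psi_phi: "psi b (phi b x) = x"
  by (cases x) (auto simp: phi_def psi_def)

theorem mainTheorem9:
  fixes P Q :: "complex poly" and d :: nat and h :: complex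
    and \<beta> :: csphere and \<alpha> :: "nat \<Rightarrow> csphere" and m :: "nat \<Rightarrow> nat"
  assumes "coprime P Q"
    and "d = max (degree P) (degree Q)" and "d \<ge> 2"
    and "rat_map P Q \<beta> = \<beta>" and "norm (multiplier (rat_map P Q) \<beta>) > 1"
    and "\<forall>q. rat_map P Q q = q \<and> q \<noteq> \<beta> \<longrightarrow> norm (multiplier (rat_map P Q) q) < 1"
    and "inj_on \<alpha> {1..d}"
    and "\<alpha> ` {1..d} = {q. rat_map P Q q = q \<and> q \<noteq> \<beta>}"
    and "h \<noteq> 0"
    and "\<forall>i\<in>{1..d}. m i \<ge> 1 \<and>
           multiplier (rat_map P Q) (\<alpha> i) = (of_nat (m i) - h) / of_nat (m i)"
  shows "\<exists>a b c e. a * e - b * c \<noteq> 0 \<and> mobius a b c e \<beta> = None \<and>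
           mobius a b c e \<circ> rat_map P Q \<circ> inv (mobius a b c e)
             = newton_map h (\<Prod>i\<in>{1..d}. [:- the (mobius a b c e (\<alpha> i)), 1:] ^ m i)"
proof -
  note cop = assms(1) and dd = assms(2) and fb = assms(4) and inj = assms(7)
    and img = assms(8) and h0 = assms(9) and mm = assms(10)
  have R: "rat_map P Q = rat_map0 P Q" by (rule rat_map_coprime[OF cop])
  have d0: "d > 0" using assms(3) by simp
  have afix: "rat_map P Q (\<alpha> i) = \<alpha> i" "\<alpha> i \<noteq> \<beta>" if "i \<in> {1..d}" for i
    using img that by blast+
  show ?thesis
  proof (cases \<beta>)
    case None
    have dPQ: "degree P > degree Q" using fix_None[of P Q] fb None R by simp
    define x where "x i = the (\<alpha> i)" for i
    have ax: "\<alpha> i = Some (x i)" if "i \<in> {1..d}" for i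
      using afix[OF that] None x_def by (cases "\<alpha> i") auto
    define F where "F = [:0,1:] * Q - P"
    have injx: "inj_on x {1..d}"
    proof (rule inj_onI)
      fix i j assume i: "i \<in> {1..d}" and j: "j \<in> {1..d}" and e: "x i = x j"
      have "\<alpha> i = \<alpha> j" using ax[OF i] ax[OF j] e by simp
      thus "i = j" using inj i j by (meson inj_onD)
    qed
    have dQ: "degree Q < d" using dPQ dd by simp
    have dF: "degree F \<le> d"
    proof -
      have "degree ([:0,1:] * Q) \<le> d"
      proof -
        have "[:0,1:] * Q = pCons 0 Q" by simp
        moreover have "degree (pCons 0 Q) \<le> Suc (degree Q)" by (rule degree_pCons_le)
        ultimately show ?thesis using dQ by simp
      qed
      moreover have "degree P \<le> d" using dd by simp
      ultimately show ?thesis unfolding F_def by (rule degree_diff_le)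
    qed
    have data: "\<forall>i\<in>{1..d}. poly F (x i) = 0 \<and> poly Q (x i) \<noteq> 0 \<and> m i \<ge> 1 \<and>
                 h * poly Q (x i) = of_nat (m i) * poly (pderiv F) (x i)"
    proof
      fix i assume i: "i \<in> {1..d}"
      have fx: "rat_map P Q (Some (x i)) = Some (x i)" using afix[OF i] ax[OF i] by simp
      have Qx: "poly Q (x i) \<noteq> 0" and Px: "poly P (x i) = x i * poly Q (x i)"
        using fix_Some[of P Q "x i"] fx R by auto
      have "multiplier (rat_map P Q) (Some (x i)) = 1 - poly (pderiv F) (x i) / poly Q (x i)"
        unfolding F_def by (rule mult_Some[OF cop fx])
      moreover have "multiplier (rat_map P Q) (Some (x i)) = (of_nat (m i) - h) / of_nat (m i)"
        using mm i ax[OF i] by (metis (no_types, lifting))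
      ultimately have "h * poly Q (x i) = of_nat (m i) * poly (pderiv F) (x i)"
        using mult_eq_aux[of "m i" "poly (pderiv F) (x i)" "poly Q (x i)" h] mm i Qx by simp
      thus "poly F (x i) = 0 \<and> poly Q (x i) \<noteq> 0 \<and> m i \<ge> 1 \<and>
                 h * poly Q (x i) = of_nat (m i) * poly (pderiv F) (x i)"
        using Qx Px mm i by (simp add: F_def)
    qed
    have "rat_map ([:0,1:]*Q - F) Q = newton_map h (\<Prod>i\<in>{1..d}. [:- x i, 1:] ^ m i)"
      by (rule core[OF injx dQ dF h0 data])
    hence main: "rat_map P Q = newton_map h (\<Prod>i\<in>{1..d}. [:- x i, 1:] ^ m i)"
      by (simp add: F_def)
    have "mobius 1 0 0 1 \<circ> rat_map P Q \<circ> inv (mobius 1 0 0 1)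
             = newton_map h (\<Prod>i\<in>{1..d}. [:- the (mobius 1 0 0 1 (\<alpha> i)), 1:] ^ m i)"
      unfolding mobius_id using main by (simp add: x_def)
    moreover have "mobius 1 0 0 1 \<beta> = None" using None by (simp add: mobius_id)
    ultimately show ?thesis by (intro exI[of _ 1] exI[of _ 0] exI[of _ 1]) simp
  next
    case (Some b)
    define Ps where "Ps = pcompose P [:b,1:]"
    define Qs where "Qs = pcompose Q [:b,1:]"
    define A where "A = revd d Qs"
    define B where "B = revd d (Ps - smult b Qs)"
    define F where "F = [:0,1:] * B - A"
    define E where "E = [:0,1:] * Q - P"
    have fbS: "rat_map P Q (Some b) = Some b" using fb Some by simp
    have conj: "phi b \<circ> rat_map P Q \<circ> psi b = rat_map A B" and dB: "degree B < d"
      using conj_Some[OF cop dd d0 fbS] unfolding A_def B_def Ps_def Qs_def by blast+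
    define y where "y i = the (phi b (\<alpha> i))" for i
    have phiS: "phi b (\<alpha> i) = Some (y i)" if "i \<in> {1..d}" for i
    proof -
      have "\<alpha> i \<noteq> Some b" using afix(2)[OF that] Some by simp
      hence "phi b (\<alpha> i) \<noteq> None" by (cases "\<alpha> i") (auto simp: phi_def)
      thus ?thesis by (auto simp: y_def)
    qed
    have injy: "inj_on y {1..d}"
    proof (rule inj_onI)
      fix i j assume i: "i \<in> {1..d}" and j: "j \<in> {1..d}" and e: "y i = y j"
      have "phi b (\<alpha> i) = phi b (\<alpha> j)" using phiS[OF i] phiS[OF j] e by simp
      hence "psi b (phi b (\<alpha> i)) = psi b (phi b (\<alpha> j))" by simp
      hence "\<alpha> i = \<alpha> j" by (simp add: psi_phi)
      thus "i = j" using inj i j by (meson inj_onD)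
    qed
    have dF: "degree F \<le> d"
    proof -
      have "[:0,1:] * B = pCons 0 B" by simp
      moreover have "degree (pCons 0 B) \<le> Suc (degree B)" by (rule degree_pCons_le)
      ultimately have "degree ([:0,1:] * B) \<le> d" using dB by simp
      moreover have "degree A \<le> d" unfolding A_def by (rule degree_revd)
      ultimately show ?thesis unfolding F_def by (rule degree_diff_le)
    qed
    have data: "\<forall>i\<in>{1..d}. poly F (y i) = 0 \<and> poly B (y i) \<noteq> 0 \<and> m i \<ge> 1 \<and>
                 h * poly B (y i) = of_nat (m i) * poly (pderiv F) (y i)"
    proof
      fix i assume i: "i \<in> {1..d}"
      have mi: "m i \<ge> 1" and mul: "multiplier (rat_map P Q) (\<alpha> i) = (of_nat (m i) - h) / of_nat (m i)"
        using mm i by auto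
      show "poly F (y i) = 0 \<and> poly B (y i) \<noteq> 0 \<and> m i \<ge> 1 \<and>
                 h * poly B (y i) = of_nat (m i) * poly (pderiv F) (y i)"
      proof (cases "\<alpha> i")
        case None
        have fN: "rat_map P Q None = None" using afix(1)[OF i] None by simp
        have dPQ: "degree P > degree Q" using fix_None[of P Q] fN R by simp
        have y0: "y i = 0" using None by (simp add: y_def phi_def)
        have t: "poly F 0 = 0" "poly B 0 = lead_coeff P"
            "poly (pderiv F) 0 = lead_coeff P - coeff Q (degree P - 1)"
          using transfer_None[OF dd dPQ, of b] unfolding F_def A_def B_def Ps_def Qs_def by blast+
        have P0: "P \<noteq> 0" using dPQ by auto
        have "multiplier (rat_map P Q) None = coeff Q (degree P - 1) / lead_coeff P"
          by (rule mult_None[OF cop fN])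
        hence "1 - (lead_coeff P - coeff Q (degree P - 1)) / lead_coeff P = (of_nat (m i) - h) / of_nat (m i)"
          using mul None P0 by (simp add: diff_divide_distrib)
        hence "h * lead_coeff P = of_nat (m i) * (lead_coeff P - coeff Q (degree P - 1))"
          using mult_eq_aux[OF mi] P0 by simp
        thus ?thesis using t y0 mi P0 by simp
      next
        case (Some x)
        have fx: "rat_map P Q (Some x) = Some x" using afix(1)[OF i] Some by simp
        have xb: "x \<noteq> b" using afix(2)[OF i] Some \<open>\<beta> = Some b\<close> by simp
        have yx: "y i = 1 / (x - b)" using Some xb by (simp add: y_def phi_def)
        have t: "poly F (1 / (x - b)) = 0" "poly B (1 / (x - b)) = (1 / (x - b)) ^ (d - 1) * poly Q x"
            "poly (pderiv F) (1 / (x - b)) = (1 / (x - b)) ^ (d - 1) * poly (pderiv E) x"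
          using transfer_Some[OF cop dd d0 fbS fx xb]
          unfolding F_def A_def B_def Ps_def Qs_def E_def by blast+
        have Qx: "poly Q x \<noteq> 0" using fix_Some[of P Q x] fx R by auto
        have "multiplier (rat_map P Q) (Some x) = 1 - poly (pderiv E) x / poly Q x"
          unfolding E_def by (rule mult_Some[OF cop fx])
        hence "h * poly Q x = of_nat (m i) * poly (pderiv E) x"
          using mult_eq_aux[OF mi _ Qx] mul Some by simp
        moreover have "(1 / (x - b)) ^ (d - 1) \<noteq> 0" using xb by simp
        ultimately show ?thesis unfolding yx t
        proof -
          assume e: "h * poly Q x = of_nat (m i) * poly (pderiv E) x"
            and k: "(1 / (x - b)) ^ (d - 1) \<noteq> 0"
          have "h * ((1 / (x - b)) ^ (d - 1) * poly Q x) = (1 / (x - b)) ^ (d - 1) * (h * poly Q x)"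
            by (simp only: mult_ac)
          also have "\<dots> = of_nat (m i) * ((1 / (x - b)) ^ (d - 1) * poly (pderiv E) x)"
            unfolding e by (simp only: mult_ac)
          finally show "0 = 0 \<and> (1 / (x - b)) ^ (d - 1) * poly Q x \<noteq> 0 \<and> 1 \<le> m i \<and>
              h * ((1 / (x - b)) ^ (d - 1) * poly Q x) = of_nat (m i) * ((1 / (x - b)) ^ (d - 1) * poly (pderiv E) x)"
            using k Qx mi by simp
        qed
      qed
    qed
    have "rat_map ([:0,1:]*B - F) B = newton_map h (\<Prod>i\<in>{1..d}. [:- y i, 1:] ^ m i)"
      by (rule core[OF injy dB dF h0 data])
    hence main: "rat_map A B = newton_map h (\<Prod>i\<in>{1..d}. [:- y i, 1:] ^ m i)"
      by (simp add: F_def)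
    have "mobius 0 1 1 (-b) \<circ> rat_map P Q \<circ> inv (mobius 0 1 1 (-b))
             = newton_map h (\<Prod>i\<in>{1..d}. [:- the (mobius 0 1 1 (-b) (\<alpha> i)), 1:] ^ m i)"
      unfolding mobius_phi inv_phi conj main y_def ..
    moreover have "mobius 0 1 1 (-b) \<beta> = None" using Some by (simp add: mobius_phi phi_def)
    ultimately show ?thesis by (intro exI[of _ 0] exI[of _ 1] exI[of _ 1] exI[of _ "-b"]) simp
  qed
qed


end
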